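(* Let $G\subseteq W(\mathsf D_n)$ be a subgroup satisfying both the (H1) condition and the minimality condition. Then the action of $G$ on the set of components of degenerate fibers $\{q_j^{\pm}: 1\le j\le n\}$ has at most three orbits.
   Context: Let $X\to\mathbb P^1$ be a standard conic bundle with $n$ degenerate geometric fibers $q_j^+\cup q_j^-$. $W(\mathsf D_n)$ is the group of signed permutations of the symbols $j^\pm\leftrightarrow q_j^\pm$ (generated by $\mathfrak S_n$ permuting indices and involutions $c_j$ exchanging $j^+,j^-$) having an even number of sign changes; it acts on $\mathrm{Pic}(\bar X)=\bigoplus_{i=-1}^n\mathbb Zl_i$ via $\Phi$: for $g=c_{j_1}\cdots c_{j_t}\tau$ ($t$ even), with $s(i)=-1$ if $i\in\{j_1,\dots,j_t\}$ else $1$, $\Phi(g)l_0=l_0$, $\Phi(g)l_{-1}=l_{-1}+\frac t2l_0-\sum_{s(i)=-1}l_i$, and for $v\ge1$, $u=\tau^{-1}(v)$: $\Phi(g)l_v=l_u$ if $s(u)=1$, $\Phi(g)l_v=l_0-l_u$ if $s(u)=-1$. $G$ satisfies (H1) if $\mathrm H^1(H,\mathrm{Pic}(\bar X))=0$ for all subgroups $H\subseteq G$. $G$ satisfies the minimality condition if it corresponds to a $k$-minimal conic bundle (no Galois-equivariant blow-down possible); for standard conic bundles this entails that for each $j$ the two components $q_j^+$ and $q_j^-$ lie in the same $G$-orbit. *)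

theory Defs
  imports Main
begin

text \<open>Symbols j^+ / j^- are encoded as pairs (j, True) / (j, False), 1 \<le> j \<le> n.\<close>

definition symbols :: "nat \<Rightarrow> (nat \<times> bool) set" where
  "symbols n = {1..n} \<times> UNIV"

definition flip :: "nat \<times> bool \<Rightarrow> nat \<times> bool" where
  "flip x = (fst x, \<not> snd x)"

definition WD :: "nat \<Rightarrow> (nat \<times> bool \<Rightarrow> nat \<times> bool) set" where
  "WD n = {\<sigma>. bij_betw \<sigma> (symbols n) (symbols n)
              \<and> (\<forall>x. x \<notin> symbols n \<longrightarrow> \<sigma> x = x)
              \<and> (\<forall>x. \<sigma> (flip x) = flip (\<sigma> x))
              \<and> even (card {j \<in> {1..n}. \<not> snd (\<sigma> (j, True))})}"

definition is_subgroup :: "('a \<Rightarrow> 'a) set \<Rightarrow> ('a \<Rightarrow> 'a) set \<Rightarrow> bool" where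
  "is_subgroup H G \<longleftrightarrow> H \<subseteq> G \<and> id \<in> H \<and> (\<forall>g\<in>H. \<forall>h\<in>H. g \<circ> h \<in> H)
     \<and> (\<forall>g\<in>H. inv g \<in> H)"

text \<open>Pic(X-bar) = free abelian group on l_{-1}, l_0, ..., l_n, as integer functions supported on {-1..n}.\<close>
definition Pic :: "nat \<Rightarrow> (int \<Rightarrow> int) set" where
  "Pic n = {x. \<forall>k. k \<notin> {-1..int n} \<longrightarrow> x k = 0}"

definition lb :: "int \<Rightarrow> int \<Rightarrow> int" where
  "lb i = (\<lambda>k. if k = i then 1 else 0)"

text \<open>class of the component: q_w^+ \<mapsto> l_w, q_w^- \<mapsto> l_0 - l_w\<close>
definition cls :: "nat \<times> bool \<Rightarrow> int \<Rightarrow> int" where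
  "cls x = (if snd x then lb (int (fst x)) else (\<lambda>k. lb 0 k - lb (int (fst x)) k))"

definition negs :: "nat \<Rightarrow> (nat \<times> bool \<Rightarrow> nat \<times> bool) \<Rightarrow> nat set" where
  "negs n \<sigma> = {w \<in> {1..n}. \<exists>v \<in> {1..n}. \<sigma> (v, True) = (w, False)}"

definition phi_basis :: "nat \<Rightarrow> (nat \<times> bool \<Rightarrow> nat \<times> bool) \<Rightarrow> int \<Rightarrow> int \<Rightarrow> int" where
  "phi_basis n \<sigma> i =
     (if i = 0 then lb 0
      else if i = -1 then
        (\<lambda>k. lb (-1) k + (int (card (negs n \<sigma>)) div 2) * lb 0 k
              - (\<Sum>w\<in>negs n \<sigma>. lb (int w) k))
      else cls (\<sigma> (nat i, True)))"

definition Phi :: "nat \<Rightarrow> (nat \<times> bool \<Rightarrow> nat \<times> bool) \<Rightarrow> (int \<Rightarrow> int) \<Rightarrow> int \<Rightarrow> int" where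
  "Phi n \<sigma> x = (\<lambda>k. \<Sum>i\<in>{-1..int n}. x i * phi_basis n \<sigma> i k)"

definition H1_vanishes :: "nat \<Rightarrow> (nat \<times> bool \<Rightarrow> nat \<times> bool) set \<Rightarrow> bool" where
  "H1_vanishes n H \<longleftrightarrow>
     (\<forall>f. (\<forall>g\<in>H. f g \<in> Pic n)
          \<and> (\<forall>g\<in>H. \<forall>h\<in>H. f (g \<circ> h) = (\<lambda>k. f g k + Phi n g (f h) k))
        \<longrightarrow> (\<exists>m\<in>Pic n. \<forall>g\<in>H. f g = (\<lambda>k. Phi n g m k - m k)))"

definition condH1 :: "nat \<Rightarrow> (nat \<times> bool \<Rightarrow> nat \<times> bool) set \<Rightarrow> bool" where
  "condH1 n G \<longleftrightarrow> (\<forall>H. is_subgroup H G \<longrightarrow> H1_vanishes n H)"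

definition minimal_cond :: "nat \<Rightarrow> (nat \<times> bool \<Rightarrow> nat \<times> bool) set \<Rightarrow> bool" where
  "minimal_cond n G \<longleftrightarrow> (\<forall>j\<in>{1..n}. \<exists>g\<in>G. g (j, True) = (j, False))"

definition orbits :: "nat \<Rightarrow> (nat \<times> bool \<Rightarrow> nat \<times> bool) set \<Rightarrow> (nat \<times> bool) set set" where
  "orbits n G = (\<lambda>x. (\<lambda>g. g x) ` G) ` symbols n"

end

theory Submission
  imports Defs
begin

lemma WD_flip: "\<sigma> \<in> WD n \<Longrightarrow> \<sigma> (flip x) = flip (\<sigma> x)"
  unfolding WD_def mem_Collect_eq by blast

lemma WD_False: "\<sigma> \<in> WD n \<Longrightarrow> \<sigma> (u, False) = flip (\<sigma> (u, True))"
  using WD_flip[of \<sigma> n "(u,True)"] by (simp add: flip_def)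

lemma WD_fst_any: "\<sigma> \<in> WD n \<Longrightarrow> fst (\<sigma> (u, b)) = fst (\<sigma> (u, True))"
  by (cases b) (simp_all add: WD_False flip_def)

lemma WD_bij: assumes "\<sigma> \<in> WD n" shows "bij \<sigma>"
proof -
  have b: "bij_betw \<sigma> (symbols n) (symbols n)" and o: "\<And>x. x \<notin> symbols n \<Longrightarrow> \<sigma> x = x"
    using assms by (auto simp: WD_def)
  have "inj \<sigma>"
  proof (rule injI)
    fix x y assume e: "\<sigma> x = \<sigma> y"
    show "x = y"
    proof (cases "x \<in> symbols n"; cases "y \<in> symbols n")
      assume "x \<in> symbols n" "y \<in> symbols n" thus ?thesis using b e by (auto simp: bij_betw_def inj_on_def)
    next
      assume "x \<in> symbols n" "y \<notin> symbols n" thus ?thesis using b e o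
        by (metis bij_betwE)
    next
      assume "x \<notin> symbols n" "y \<in> symbols n" thus ?thesis using b e o
        by (metis bij_betwE)
    next
      assume "x \<notin> symbols n" "y \<notin> symbols n" thus ?thesis using e o by simp
    qed
  qed
  moreover have "surj \<sigma>"
  proof -
    { fix y have "y \<in> range \<sigma>"
      proof (cases "y \<in> symbols n")
        case True
        hence "y \<in> \<sigma> ` symbols n" using bij_betw_imp_surj_on[OF b] by simp
        thus ?thesis by auto
      next
        case False thus ?thesis using o by (metis rangeI)
      qed }
    thus ?thesis by auto
  qed
  ultimately show ?thesis by (simp add: bij_def)
qed

lemma WD_inv1: "\<sigma> \<in> WD n \<Longrightarrow> inv \<sigma> (\<sigma> x) = x"
  using WD_bij bij_is_inj inv_f_f by metis

lemma WD_inv2: "\<sigma> \<in> WD n \<Longrightarrow> \<sigma> (inv \<sigma> x) = x"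
  using WD_bij bij_is_surj surj_f_inv_f by metis

lemma WD_comp_inv: "\<sigma> \<in> WD n \<Longrightarrow> \<sigma> \<circ> inv \<sigma> = id"
  using WD_inv2 by fastforce

lemma WD_sym: "\<sigma> \<in> WD n \<Longrightarrow> x \<in> symbols n \<Longrightarrow> \<sigma> x \<in> symbols n"
  by (auto simp: WD_def bij_betw_def)

lemma WD_fst_range: "\<sigma> \<in> WD n \<Longrightarrow> u \<in> {1..n} \<Longrightarrow> fst (\<sigma> (u, b)) \<in> {1..n}"
  using WD_sym[of \<sigma> n "(u,b)"] by (auto simp: symbols_def mem_Times_iff)

lemma WD_fst_inj: assumes "\<sigma> \<in> WD n" "fst (\<sigma> (u, True)) = fst (\<sigma> (u', True))"
  shows "u = u'"
proof (cases "snd (\<sigma> (u, True)) = snd (\<sigma> (u', True))")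
  case True
  hence "\<sigma> (u, True) = \<sigma> (u', True)" using assms(2) by (simp add: prod_eq_iff)
  thus ?thesis using WD_bij[OF assms(1)] by (auto dest: bij_is_inj injD)
next
  case False
  hence "\<sigma> (u', True) = \<sigma> (u, False)" using assms(2) WD_False[OF assms(1), of u]
    by (simp add: prod_eq_iff flip_def)
  hence "(u', True) = (u, False)" using WD_bij[OF assms(1)] by (auto dest: bij_is_inj injD)
  thus ?thesis by simp
qed

definition Mv :: "nat set \<Rightarrow> int \<Rightarrow> int" where
  "Mv A = (\<lambda>k. if k \<in> int ` A then 1 else 0)"

lemma Phi_lb: assumes "i \<in> {-1..int n}" shows "Phi n \<sigma> (lb i) = phi_basis n \<sigma> i"
proof
  fix k
  have "Phi n \<sigma> (lb i) k = (\<Sum>i'\<in>{-1..int n}. (if i' = i then phi_basis n \<sigma> i' k else 0))"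
    unfolding Phi_def lb_def by (rule sum.cong) auto
  also have "\<dots> = phi_basis n \<sigma> i k" using assms by (simp add: sum.delta')
  finally show "Phi n \<sigma> (lb i) k = phi_basis n \<sigma> i k" .
qed

lemma Phi_add: "Phi n \<sigma> (\<lambda>k. x k + y k) = (\<lambda>k. Phi n \<sigma> x k + Phi n \<sigma> y k)"
  by (simp add: Phi_def distrib_right sum.distrib)

lemma Phi_diff: "Phi n \<sigma> (\<lambda>k. x k - y k) = (\<lambda>k. Phi n \<sigma> x k - Phi n \<sigma> y k)"
  by (simp add: Phi_def left_diff_distrib sum_subtractf)

lemma Phi_smul: "Phi n \<sigma> (\<lambda>k. c * x k) = (\<lambda>k. c * Phi n \<sigma> x k)"
  by (simp add: Phi_def sum_distrib_left mult.assoc)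

lemma Phi_sum: "Phi n \<sigma> (\<lambda>k. \<Sum>u\<in>S. v u k) = (\<lambda>k. \<Sum>u\<in>S. Phi n \<sigma> (v u) k)"
  unfolding Phi_def sum_distrib_right by (rule ext, rule sum.swap)

lemma cls_flip: "cls (flip y) k = lb 0 k - cls y k"
  by (simp add: cls_def flip_def)

lemma phi_basis_pos: "u \<ge> 1 \<Longrightarrow> phi_basis n \<sigma> (int u) = cls (\<sigma> (u, True))"
  by (simp add: phi_basis_def)

lemma Phi_cls: assumes "\<sigma> \<in> WD n" "x \<in> symbols n" shows "Phi n \<sigma> (cls x) = cls (\<sigma> x)"
proof -
  obtain w b where x: "x = (w, b)" by fastforce
  have w: "w \<in> {1..n}" using assms(2) x by (auto simp: symbols_def)
  have wi: "int w \<in> {-1..int n}" using w by auto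
  have pos: "Phi n \<sigma> (lb (int w)) = cls (\<sigma> (w, True))"
    using Phi_lb[OF wi] phi_basis_pos w by auto
  show ?thesis
  proof (cases b)
    case True thus ?thesis using x pos by (simp add: cls_def)
  next
    case False
    have "cls x = (\<lambda>k. lb 0 k - lb (int w) k)" using x False by (simp add: cls_def)
    hence "Phi n \<sigma> (cls x) = (\<lambda>k. Phi n \<sigma> (lb 0) k - Phi n \<sigma> (lb (int w)) k)"
      by (simp add: Phi_diff)
    also have "\<dots> = (\<lambda>k. lb 0 k - cls (\<sigma> (w, True)) k)"
      using Phi_lb[of 0 n \<sigma>] pos by (simp add: phi_basis_def)
    also have "\<dots> = cls (\<sigma> x)" using x False WD_False[OF assms(1)] by (simp add: cls_flip fun_eq_iff)
    finally show ?thesis .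
  qed
qed

lemma Mv_sum: assumes "A \<subseteq> {1..n}" shows "Mv A = (\<lambda>k. \<Sum>u\<in>A. cls (u, True) k)"
proof
  fix k
  have fin: "finite A" using assms finite_subset by blast
  show "Mv A k = (\<Sum>u\<in>A. cls (u, True) k)"
  proof (cases "k < 0")
    case True
    hence "\<And>u. cls (u, True) k = 0" by (simp add: cls_def lb_def)
    thus ?thesis using True by (auto simp: Mv_def)
  next
    case False
    define m where "m = nat k"
    have m: "k = int m" using False by (simp add: m_def)
    have "(\<Sum>u\<in>A. cls (u, True) k) = (\<Sum>u\<in>A. if u = m then 1 else 0)"
      by (rule sum.cong) (auto simp: cls_def lb_def m)
    also have "\<dots> = (if m \<in> A then 1 else 0)" using fin by (simp add: sum.delta')
    finally show ?thesis by (auto simp: Mv_def m)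
  qed
qed

lemma Phi_M: assumes "A \<subseteq> {1..n}"
  shows "Phi n \<sigma> (Mv A) = (\<lambda>k. \<Sum>u\<in>A. cls (\<sigma> (u, True)) k)"
proof -
  have "Phi n \<sigma> (Mv A) = (\<lambda>k. \<Sum>u\<in>A. Phi n \<sigma> (cls (u, True)) k)"
    by (simp add: Mv_sum[OF assms] Phi_sum)
  also have "\<dots> = (\<lambda>k. \<Sum>u\<in>A. cls (\<sigma> (u, True)) k)"
  proof (rule ext, rule sum.cong)
    fix k u assume "u \<in> A"
    hence u: "u \<ge> 1" "int u \<in> {-1..int n}" using assms by auto
    have "cls (u, True) = lb (int u)" by (simp add: cls_def)
    thus "Phi n \<sigma> (cls (u, True)) k = cls (\<sigma> (u, True)) k"
      using Phi_lb[OF u(2)] phi_basis_pos[OF u(1)] by simp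
  qed simp
  finally show ?thesis .
qed

lemma Phi_comp_M: assumes "g \<in> WD n" "h \<in> WD n" "A \<subseteq> {1..n}"
  shows "Phi n (g \<circ> h) (Mv A) = Phi n g (Phi n h (Mv A))"
proof -
  have "Phi n g (Phi n h (Mv A)) = (\<lambda>k. \<Sum>u\<in>A. Phi n g (cls (h (u, True))) k)"
    by (simp add: Phi_M[OF assms(3)] Phi_sum)
  also have "\<dots> = (\<lambda>k. \<Sum>u\<in>A. cls (g (h (u, True))) k)"
  proof (rule ext, rule sum.cong)
    fix k u assume "u \<in> A"
    hence "(u, True) \<in> symbols n" using assms(3) by (auto simp: symbols_def)
    hence "h (u, True) \<in> symbols n" using WD_sym[OF assms(2)] by blast
    thus "Phi n g (cls (h (u, True))) k = cls (g (h (u, True))) k"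
      using Phi_cls[OF assms(1)] by simp
  qed simp
  finally show ?thesis by (simp add: Phi_M[OF assms(3)])
qed

lemma card_sum_int: "finite A \<Longrightarrow> int (card {u\<in>A. P u}) = (\<Sum>u\<in>A. of_bool (P u))"
proof -
  assume "finite A"
  moreover have "A \<inter> {x. P x} = {u\<in>A. P u}" by auto
  ultimately show ?thesis by simp
qed

lemma cls_pos_val: "w \<ge> 1 \<Longrightarrow> cls y (int w) = (if fst y = w then (if snd y then 1 else -1) else 0)"
  by (auto simp: cls_def lb_def)

lemma cls_zero_val: "fst y \<ge> 1 \<Longrightarrow> cls y 0 = (if snd y then 0 else 1)"
  by (auto simp: cls_def lb_def)

lemma cls_neg_val: "k < 0 \<Longrightarrow> cls y k = 0"
  by (auto simp: cls_def lb_def)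

lemma Phi_flipped:
  assumes g: "g \<in> WD n" and j: "j \<in> {1..n}" and gj: "g (j, True) = (j, False)"
  shows "Phi n g x (int j) = - x (-1) - x (int j)"
proof -
  have negs: "j \<in> negs n g" using j gj unfolding negs_def by blast
  have finneg: "finite (negs n g)" unfolding negs_def by simp
  have pb: "phi_basis n g i (int j) = (if i = -1 then -1 else if i = int j then -1 else 0)"
    if i: "i \<in> {-1..int n}" for i
  proof -
    consider "i = -1" | "i = 0" | "i \<ge> 1" using i by fastforce
    thus ?thesis
    proof cases
      case 1
      have "(\<Sum>w\<in>negs n g. lb (int w) (int j)) = (\<Sum>w\<in>negs n g. if w = j then 1 else 0)"
        by (rule sum.cong) (auto simp: lb_def)
      also have "\<dots> = 1" using negs finneg by (simp add: sum.delta')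
      finally show ?thesis using 1 j by (simp add: phi_basis_def lb_def)
    next
      case 2 thus ?thesis using j by (simp add: phi_basis_def lb_def)
    next
      case 3
      define u where "u = nat i"
      have u: "i = int u" "u \<ge> 1" using 3 by (simp_all add: u_def)
      have "phi_basis n g i (int j) = cls (g (u, True)) (int j)"
        using u phi_basis_pos by simp
      also have "\<dots> = (if u = j then -1 else 0)"
      proof (cases "u = j")
        case True thus ?thesis using gj j by (simp add: cls_pos_val)
      next
        case False
        hence "fst (g (u, True)) \<noteq> j" using WD_fst_inj[OF g, of u j] gj by auto
        thus ?thesis using False j by (simp add: cls_pos_val)
      qed
      finally show ?thesis using u by auto
    qed
  qed
  have "Phi n g x (int j) = (\<Sum>i\<in>{-1..int n}. x i * (if i = -1 then -1 else if i = int j then -1 else 0))"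
    unfolding Phi_def by (rule sum.cong) (simp_all add: pb)
  also have "\<dots> = (\<Sum>i\<in>{-1..int n}. (if i = -1 then - x i else 0) + (if i = int j then - x i else 0))"
    by (rule sum.cong) auto
  also have "\<dots> = - x (-1) - x (int j)" using j by (simp add: sum.distrib sum.delta')
  finally show ?thesis .
qed

definition Fv :: "nat \<Rightarrow> (nat \<times> bool \<Rightarrow> nat \<times> bool) \<Rightarrow> nat set \<Rightarrow> int \<Rightarrow> int" where
  "Fv n \<sigma> A = (\<lambda>k. Phi n \<sigma> (Mv A) k - Mv A k)"

lemma Fv_props:
  assumes g: "g \<in> WD n" and A: "A \<subseteq> {1..n}" and inv: "\<forall>u\<in>A. fst (g (u, True)) \<in> A"
    and par: "even (card {u\<in>A. \<not> snd (g (u, True))})"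
  shows "even (Fv n g A k) \<and> (k \<notin> {-1..int n} \<longrightarrow> Fv n g A k = 0)"
proof -
  have fin: "finite A" using A finite_subset by blast
  have Fk: "Fv n g A k = (\<Sum>u\<in>A. cls (g (u, True)) k) - Mv A k"
    by (simp add: Fv_def Phi_M[OF A])
  have fst1: "fst (g (u, True)) \<ge> 1" if "u \<in> A" for u using inv that A by force
  consider "k < 0" | "k = 0" | "k > 0" by linarith
  thus ?thesis
  proof cases
    case 1
    hence "k \<notin> int ` A" by auto
    thus ?thesis using Fk 1 by (simp add: cls_neg_val Mv_def)
  next
    case 2
    have "(\<Sum>u\<in>A. cls (g (u, True)) k) = (\<Sum>u\<in>A. of_bool (\<not> snd (g (u, True))))"
    proof (rule sum.cong)
      fix u assume "u \<in> A"
      thus "cls (g (u, True)) k = of_bool (\<not> snd (g (u, True)))"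
        using cls_zero_val[OF fst1[OF \<open>u \<in> A\<close>]] 2 by simp
    qed simp
    also have "\<dots> = int (card {u\<in>A. \<not> snd (g (u, True))})" using card_sum_int[OF fin] by simp
    moreover have "0 \<notin> int ` A" using A by force
    ultimately have "Fv n g A k = int (card {u\<in>A. \<not> snd (g (u, True))})"
      using Fk 2 by (simp add: Mv_def)
    thus ?thesis using par 2 by simp
  next
    case 3
    define w where "w = nat k"
    have w: "k = int w" "w \<ge> 1" using 3 by (simp_all add: w_def)
    have cv: "cls (g (u, True)) k = (if fst (g (u, True)) = w then (if snd (g (u, True)) then 1 else -1) else 0)" for u
      using w cls_pos_val by simp
    show ?thesis
    proof (cases "w \<in> A")
      case True
      have injA: "inj_on (\<lambda>u. fst (g (u, True))) A" using WD_fst_inj[OF g] by (auto simp: inj_on_def)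
      have "(\<lambda>u. fst (g (u, True))) ` A = A" using endo_inj_surj[OF fin _ injA] inv by auto
      hence "w \<in> (\<lambda>u. fst (g (u, True))) ` A" using True by simp
      then obtain u0 where u0: "u0 \<in> A" "fst (g (u0, True)) = w" by blast
      have "(\<Sum>u\<in>A. cls (g (u, True)) k) = (\<Sum>u\<in>A. if u = u0 then (if snd (g (u0, True)) then 1 else -1) else 0)"
      proof (rule sum.cong)
        fix u assume "u \<in> A"
        have "fst (g (u, True)) = w \<longleftrightarrow> u = u0" using u0 WD_fst_inj[OF g, of u u0] by auto
        thus "cls (g (u, True)) k = (if u = u0 then (if snd (g (u0, True)) then 1 else -1) else 0)"
          using cv by auto
      qed simp
      also have "\<dots> = (if snd (g (u0, True)) then 1 else -1)" using u0 fin by (simp add: sum.delta')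
      finally have "Fv n g A k = (if snd (g (u0, True)) then 1 else -1) - 1"
        using Fk True w by (simp add: Mv_def)
      moreover have "k \<in> {-1..int n}" using True A w by auto
      ultimately show ?thesis by auto
    next
      case False
      have "(\<Sum>u\<in>A. cls (g (u, True)) k) = (\<Sum>u\<in>A. 0)"
      proof (rule sum.cong)
        fix u assume "u \<in> A"
        hence "fst (g (u, True)) \<noteq> w" using inv False by auto
        thus "cls (g (u, True)) k = 0" using cv by simp
      qed simp
      moreover have "int w \<notin> int ` A" using False by auto
      ultimately have "Fv n g A k = 0" using Fk w by (simp add: Mv_def)
      thus ?thesis by simp
    qed
  qed
qed

lemma par_aux: "(a::int) + 2 * b = 1 \<Longrightarrow> a + 2 * c = 0 \<Longrightarrow> False"
  by presburger

lemma not_H1: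
  assumes HW: "H \<subseteq> WD n" and A: "A \<subseteq> {1..n}"
    and inv: "\<forall>h\<in>H. \<forall>u\<in>A. fst (h (u, True)) \<in> A"
    and par: "\<forall>h\<in>H. even (card {u\<in>A. \<not> snd (h (u, True))})"
    and j: "j \<in> A" "h1 \<in> H" "h1 (j, True) = (j, False)"
    and k: "k \<in> {1..n}" "k \<notin> A" "h2 \<in> H" "h2 (k, True) = (k, False)"
  shows "\<not> H1_vanishes n H"
proof
  assume van: "H1_vanishes n H"
  define f where "f = (\<lambda>\<sigma>. \<lambda>k. Fv n \<sigma> A k div 2)"
  have ev: "Fv n g A = (\<lambda>k. 2 * f g k)" if "g \<in> H" for g
    using Fv_props[of g n A] that HW A inv par by (auto simp: f_def fun_eq_iff)
  have pic: "\<forall>g\<in>H. f g \<in> Pic n"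
  proof
    fix g assume g: "g \<in> H"
    have "Fv n g A k = 0" if "k \<notin> {-1..int n}" for k
      using Fv_props[of g n A k] g HW A inv par that by blast
    thus "f g \<in> Pic n" by (simp add: f_def Pic_def)
  qed
  have coc: "\<forall>g\<in>H. \<forall>h\<in>H. f (g \<circ> h) = (\<lambda>k. f g k + Phi n g (f h) k)"
  proof (intro ballI)
    fix g h assume g: "g \<in> H" and h: "h \<in> H"
    have gW: "g \<in> WD n" and hW: "h \<in> WD n" using g h HW by auto
    have "Phi n h (Mv A) x = 2 * f h x + Mv A x" for x
    proof -
      have "Fv n h A x = 2 * f h x" using ev[OF h] by simp
      thus ?thesis unfolding Fv_def by simp
    qed
    hence "Phi n h (Mv A) = (\<lambda>k. 2 * f h k + Mv A k)" by auto
    hence "Phi n (g \<circ> h) (Mv A) = (\<lambda>k. 2 * Phi n g (f h) k + Phi n g (Mv A) k)"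
      using Phi_comp_M[OF gW hW A] by (simp add: Phi_add Phi_smul)
    hence "Fv n (g \<circ> h) A = (\<lambda>k. 2 * Phi n g (f h) k + 2 * f g k)"
      using ev[OF g] by (simp add: Fv_def fun_eq_iff algebra_simps)
    thus "f (g \<circ> h) = (\<lambda>k. f g k + Phi n g (f h) k)"
      by (simp add: f_def fun_eq_iff)
  qed
  obtain m where m: "m \<in> Pic n" "\<forall>g\<in>H. f g = (\<lambda>k. Phi n g m k - m k)"
    using van pic coc unfolding H1_vanishes_def by blast
  have jn: "j \<in> {1..n}" using j A by auto
  have h1W: "h1 \<in> WD n" and h2W: "h2 \<in> WD n" using j k HW by auto
  have M1: "Mv A (-1) = 0" "Mv A (int j) = 1" "Mv A (int k) = 0" using j k by (auto simp: Mv_def)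
  have a1: "f h1 (int j) = -1"
    using Phi_flipped[OF h1W jn j(3), of "Mv A"] M1 by (simp add: f_def Fv_def)
  have a2: "f h1 (int j) = Phi n h1 m (int j) - m (int j)"
    using m(2) j(2) by simp
  have a3: "f h2 (int k) = 0"
    using Phi_flipped[OF h2W k(1) k(4), of "Mv A"] M1 by (simp add: f_def Fv_def)
  have a4: "f h2 (int k) = Phi n h2 m (int k) - m (int k)"
    using m(2) k(3) by simp
  have b1: "Phi n h1 m (int j) = - m (-1) - m (int j)" by (rule Phi_flipped[OF h1W jn j(3)])
  have b2: "Phi n h2 m (int k) = - m (-1) - m (int k)" by (rule Phi_flipped[OF h2W k(1) k(4)])
  have e1: "m (-1) + 2 * m (int j) = 1" using a1 a2 b1 by linarith
  have e2: "m (-1) + 2 * m (int k) = 0" using a3 a4 b2 by linarith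
  show False using par_aux[OF e1 e2] .
qed

lemma card_xor:
  assumes fin: "finite A" and bij: "bij_betw \<pi> A A"
  shows "card {u\<in>A. a u \<noteq> b (\<pi> u)} + 2 * card {u\<in>A. a u \<and> b (\<pi> u)}
         = card {u\<in>A. a u} + card {u\<in>A. b u}"
proof -
  have c: "int (card {u\<in>A. P u}) = (\<Sum>u\<in>A. of_bool (P u))" for P
  proof -
    have "A \<inter> {x. P x} = {u\<in>A. P u}" by auto
    thus ?thesis using fin by simp
  qed
  have "(\<Sum>u\<in>A. (of_bool (a u \<noteq> b (\<pi> u)) :: int)) + 2 * (\<Sum>u\<in>A. of_bool (a u \<and> b (\<pi> u)))
      = (\<Sum>u\<in>A. of_bool (a u) + of_bool (b (\<pi> u)))"
    by (simp add: sum_distrib_left sum.distrib[symmetric]) (rule sum.cong, auto)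
  also have "\<dots> = (\<Sum>u\<in>A. of_bool (a u)) + (\<Sum>u\<in>A. of_bool (b u))"
    using sum.reindex_bij_betw[OF bij, of "\<lambda>w. (of_bool (b w) :: int)"] by (simp add: sum.distrib)
  finally have "int (card {u\<in>A. a u \<noteq> b (\<pi> u)}) + 2 * int (card {u\<in>A. a u \<and> b (\<pi> u)})
      = int (card {u\<in>A. a u}) + int (card {u\<in>A. b u})" by (simp only: c)
  thus ?thesis by linarith
qed

lemma pi_bij:
  assumes h: "h \<in> WD n" and A: "A \<subseteq> {1..n}" and inv: "\<forall>u\<in>A. fst (h (u, True)) \<in> A"
  shows "bij_betw (\<lambda>u. fst (h (u, True))) A A"
proof -
  have fin: "finite A" using A finite_subset by blast
  have injA: "inj_on (\<lambda>u. fst (h (u, True))) A" using WD_fst_inj[OF h] by (auto simp: inj_on_def)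
  have "(\<lambda>u. fst (h (u, True))) ` A = A" using endo_inj_surj[OF fin _ injA] inv by auto
  thus ?thesis using injA by (simp add: bij_betw_def)
qed

definition chi :: "nat set \<Rightarrow> (nat \<times> bool \<Rightarrow> nat \<times> bool) \<Rightarrow> bool" where
  "chi A \<sigma> = odd (card {u\<in>A. \<not> snd (\<sigma> (u, True))})"

lemma chi_comp:
  assumes g: "g \<in> WD n" and h: "h \<in> WD n" and A: "A \<subseteq> {1..n}"
    and inv: "\<forall>u\<in>A. fst (h (u, True)) \<in> A"
  shows "chi A (g \<circ> h) = (chi A g \<noteq> chi A h)"
proof -
  have fin: "finite A" using A finite_subset by blast
  let ?\<pi> = "\<lambda>u. fst (h (u, True))"
  have pt: "(\<not> snd ((g \<circ> h) (u, True))) = ((\<not> snd (h (u, True))) \<noteq> (\<not> snd (g (?\<pi> u, True))))" for u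
  proof (cases "snd (h (u, True))")
    case True
    hence "h (u, True) = (?\<pi> u, True)" by (simp add: prod_eq_iff)
    thus ?thesis using True by simp
  next
    case False
    hence "h (u, True) = (?\<pi> u, False)" by (simp add: prod_eq_iff)
    thus ?thesis using False WD_False[OF g, of "?\<pi> u"] by (simp add: flip_def)
  qed
  have "card {u\<in>A. \<not> snd ((g \<circ> h) (u, True))} = card {u\<in>A. (\<not> snd (h (u, True))) \<noteq> (\<not> snd (g (?\<pi> u, True)))}"
    using pt by presburger
  moreover note card_xor[OF fin pi_bij[OF h A inv], of "\<lambda>u. \<not> snd (h (u, True))" "\<lambda>w. \<not> snd (g (w, True))"]
  ultimately show ?thesis unfolding chi_def by presburger
qed

lemma chi_id: "chi A id = False"
  by (simp add: chi_def)

lemma WD_reach_True: "\<sigma> \<in> WD n \<Longrightarrow> \<exists>e. \<sigma> (u, e) = (fst (\<sigma> (u, True)), True)"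
proof (cases "snd (\<sigma> (u, True))")
  case True thus ?thesis by (metis prod.collapse)
next
  case False
  assume s: "\<sigma> \<in> WD n"
  hence "\<sigma> (u, False) = (fst (\<sigma> (u, True)), True)" using False WD_False[OF s, of u] by (simp add: flip_def)
  thus ?thesis by blast
qed

lemma par_aux2: "(a::nat) + 2 * b = 2 * c \<Longrightarrow> even a"
  by presburger

lemma noflip_even:
  assumes HW: "H \<subseteq> WD n" and comp: "\<forall>g\<in>H. \<forall>h\<in>H. g \<circ> h \<in> H"
    and invH: "\<forall>g\<in>H. inv g \<in> H" and A: "A \<subseteq> {1..n}"
    and inv: "\<forall>h\<in>H. \<forall>u\<in>A. fst (h (u, True)) \<in> A"
    and nf: "\<forall>h\<in>H. \<forall>u\<in>A. h (u, True) \<noteq> (u, False)"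
    and g: "g \<in> H"
  shows "even (card {u\<in>A. \<not> snd (g (u, True))})"
proof -
  have fin: "finite A" using A finite_subset by blast
  define IO where "IO u = (\<lambda>h. fst (h (u, True))) ` H" for u
  define r where "r u = Min (IO u)" for u
  define s where "s u = (\<exists>h\<in>H. h (u, True) = (r u, True))" for u
  have rIO: "r u \<in> IO u" if "u \<in> A" for u
  proof -
    have "IO u \<subseteq> A" using inv that by (auto simp: IO_def)
    hence "finite (IO u)" using fin finite_subset by blast
    moreover have "IO u \<noteq> {}" using g by (auto simp: IO_def)
    ultimately show ?thesis unfolding r_def by simp
  qed
  have IO_eq: "IO (fst (h (u, True))) = IO u" if h: "h \<in> H" and u: "u \<in> A" for h u
  proof -
    let ?w = "fst (h (u, True))"
    have hW: "h \<in> WD n" using h HW by auto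
    obtain e where e: "h (u, e) = (?w, True)" using WD_reach_True[OF hW] by blast
    have 1: "(u, e) = inv h (?w, True)" using e WD_inv1[OF hW] by metis
    show ?thesis
    proof
      show "IO ?w \<subseteq> IO u"
      proof
        fix x assume "x \<in> IO ?w"
        then obtain k where k: "k \<in> H" "x = fst (k (?w, True))" by (auto simp: IO_def)
        have kh: "k \<circ> h \<in> H" "k \<circ> h \<in> WD n" using comp k h HW by auto
        have "x = fst ((k \<circ> h) (u, e))" using k e by simp
        also have "\<dots> = fst ((k \<circ> h) (u, True))" using WD_fst_any[OF kh(2)] by blast
        finally have xe: "x = fst ((k \<circ> h) (u, True))" .
        show "x \<in> IO u" unfolding IO_def
          by (rule image_eqI[where f="\<lambda>h. fst (h (u, True))", OF _ kh(1)]) (simp add: xe)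
      qed
    next
      show "IO u \<subseteq> IO ?w"
      proof
        fix x assume "x \<in> IO u"
        then obtain k where k: "k \<in> H" "x = fst (k (u, True))" by (auto simp: IO_def)
        have kh: "k \<circ> inv h \<in> H" "k \<circ> inv h \<in> WD n" using comp k h HW invH by auto
        have kW: "k \<in> WD n" using k HW by auto
        have "x = fst (k (u, e))" using k WD_fst_any[OF kW] by metis
        also have "\<dots> = fst ((k \<circ> inv h) (?w, True))" using 1 by simp
        finally have xe: "x = fst ((k \<circ> inv h) (?w, True))" .
        show "x \<in> IO ?w" unfolding IO_def
          by (rule image_eqI[where f="\<lambda>h. fst (h (?w, True))", OF _ kh(1)]) (simp add: xe)
      qed
    qed
  qed
  have excl: False if u: "u \<in> A" and k1: "k1 \<in> H" "k1 (u, True) = (w, True)"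
    and k2: "k2 \<in> H" "k2 (u, True) = (w, False)" for u w k1 k2
  proof -
    have k1W: "k1 \<in> WD n" using k1 HW by auto
    have wA: "w \<in> A" using inv k1 u by force
    have "k2 \<circ> inv k1 \<in> H" using comp invH k1 k2 by auto
    moreover have "(k2 \<circ> inv k1) (w, True) = (w, False)"
      using k1(2) k2(2) WD_inv1[OF k1W, of "(u, True)"] by simp
    ultimately show False using nf wA by blast
  qed
  have F4: "s u \<or> (\<exists>k\<in>H. k (u, True) = (r u, False))" if uA: "u \<in> A" for u
  proof -
    obtain k where k: "k \<in> H" "r u = fst (k (u, True))" using rIO[OF uA] by (auto simp: IO_def)
    thus ?thesis unfolding s_def by (metis prod.collapse)
  qed
  have gW: "g \<in> WD n" using g HW by auto
  let ?\<pi> = "\<lambda>u. fst (g (u, True))"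
  have key: "(\<not> snd (g (u, True))) = (s u \<noteq> s (?\<pi> u))" if u: "u \<in> A" for u
  proof -
    let ?w = "?\<pi> u"
    have wA: "?w \<in> A" using inv g u by auto
    have rw: "r ?w = r u" using IO_eq[OF g u] by (simp add: r_def)
    show ?thesis
    proof (cases "snd (g (u, True))")
      case True
      hence gu: "g (u, True) = (?w, True)" by (simp add: prod_eq_iff)
      have "s ?w \<Longrightarrow> s u"
      proof -
        assume "s ?w"
        then obtain k where k: "k \<in> H" "k (?w, True) = (r u, True)" using rw by (auto simp: s_def)
        have "k \<circ> g \<in> H" using comp k g by auto
        moreover have "(k \<circ> g) (u, True) = (r u, True)" using k gu by simp
        ultimately show "s u" unfolding s_def by blast
      qed
      moreover have "s u \<Longrightarrow> s ?w"
      proof -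
        assume "s u"
        then obtain k where k: "k \<in> H" "k (u, True) = (r u, True)" by (auto simp: s_def)
        have "k \<circ> inv g \<in> H" using comp invH k g by auto
        moreover have "(k \<circ> inv g) (?w, True) = (r ?w, True)"
          using k gu rw WD_inv1[OF gW, of "(u, True)"] by simp
        ultimately show "s ?w" unfolding s_def by blast
      qed
      ultimately show ?thesis using True by blast
    next
      case False
      hence gu: "g (u, True) = (?w, False)" by (simp add: prod_eq_iff)
      have "g (u, False) = flip (?w, False)" using WD_False[OF gW, of u] gu by metis
      hence guF: "g (u, False) = (?w, True)" by (simp add: flip_def)
      have "s ?w \<Longrightarrow> \<not> s u"
      proof -
        assume "s ?w"
        then obtain k where k: "k \<in> H" "k (?w, True) = (r u, True)" using rw by (auto simp: s_def)
        have kg: "k \<circ> g \<in> H" "k \<circ> g \<in> WD n" using comp k g HW by auto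
        have "(k \<circ> g) (u, False) = (r u, True)" using k guF by simp
        hence "(k \<circ> g) (u, True) = (r u, False)" using WD_False[OF kg(2), of u] by (simp add: flip_def prod_eq_iff)
        thus "\<not> s u" using excl[OF u] kg(1) unfolding s_def by blast
      qed
      moreover have "\<not> s ?w \<Longrightarrow> s u"
      proof -
        assume "\<not> s ?w"
        then obtain k where k: "k \<in> H" "k (?w, True) = (r u, False)" using F4[OF wA] rw by auto
        have kg: "k \<circ> g \<in> H" "k \<circ> g \<in> WD n" using comp k g HW by auto
        have "(k \<circ> g) (u, False) = (r u, False)" using k guF by simp
        hence "(k \<circ> g) (u, True) = (r u, True)" using WD_False[OF kg(2), of u] by (simp add: flip_def prod_eq_iff)
        thus "s u" using kg(1) unfolding s_def by blast
      qed
      ultimately show ?thesis using False by blast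
    qed
  qed
  have "{u\<in>A. \<not> snd (g (u, True))} = {u\<in>A. s u \<noteq> s (?\<pi> u)}"
    using key by blast
  moreover have ginv: "\<forall>u\<in>A. fst (g (u, True)) \<in> A" using inv g by auto
  note cx = card_xor[OF fin pi_bij[OF gW A ginv], of s s]
  have "card {u\<in>A. s u \<noteq> s (?\<pi> u)} + 2 * card {u\<in>A. s u \<and> s (?\<pi> u)} = 2 * card {u\<in>A. s u}"
    using cx by simp
  hence "even (card {u\<in>A. s u \<noteq> s (?\<pi> u)})" by (rule par_aux2)
  ultimately show ?thesis by simp
qed

lemma four_xor:
  fixes G :: "'g set" and mul :: "'g \<Rightarrow> 'g \<Rightarrow> 'g" and c1 c2 c3 c4 :: "'g \<Rightarrow> bool"
  assumes cl: "\<And>x y. x \<in> G \<Longrightarrow> y \<in> G \<Longrightarrow> mul x y \<in> G"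
    and h1: "\<And>x y. x \<in> G \<Longrightarrow> y \<in> G \<Longrightarrow> c1 (mul x y) = (c1 x \<noteq> c1 y)"
    and h2: "\<And>x y. x \<in> G \<Longrightarrow> y \<in> G \<Longrightarrow> c2 (mul x y) = (c2 x \<noteq> c2 y)"
    and h3: "\<And>x y. x \<in> G \<Longrightarrow> y \<in> G \<Longrightarrow> c3 (mul x y) = (c3 x \<noteq> c3 y)"
    and h4: "\<And>x y. x \<in> G \<Longrightarrow> y \<in> G \<Longrightarrow> c4 (mul x y) = (c4 x \<noteq> c4 y)"
    and s0: "\<And>x. x \<in> G \<Longrightarrow> (c1 x \<noteq> c2 x) = (c3 x \<noteq> c4 x)"
    and w1: "a \<in> G" "c1 a" and w2: "b \<in> G" "c2 b" and w3: "d \<in> G" "c3 d" and w4: "e \<in> G" "c4 e"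
  shows "\<exists>x\<in>G. c1 x \<and> c2 x \<and> c3 x \<and> c4 x"
proof -
  let ?P = "\<lambda>x. c1 x \<and> c2 x \<and> c3 x \<and> c4 x"
  have m: "mul a b \<in> G" "mul a d \<in> G" "mul a e \<in> G" "mul b d \<in> G" "mul b e \<in> G" "mul d e \<in> G"
    "mul (mul a b) d \<in> G" "mul (mul a b) e \<in> G" "mul (mul a d) e \<in> G" "mul (mul b d) e \<in> G"
    using cl w1 w2 w3 w4 by blast+
  have "?P a \<or> ?P b \<or> ?P d \<or> ?P e \<or> ?P (mul a b) \<or> ?P (mul a d) \<or> ?P (mul a e) \<or> ?P (mul b d)
    \<or> ?P (mul b e) \<or> ?P (mul d e) \<or> ?P (mul (mul a b) d) \<or> ?P (mul (mul a b) e)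
    \<or> ?P (mul (mul a d) e) \<or> ?P (mul (mul b d) e)"
    using s0[OF w1(1)] s0[OF w2(1)] s0[OF w3(1)] s0[OF w4(1)] w1(2) w2(2) w3(2) w4(2)
    by (simp add: h1 h2 h3 h4 cl w1(1) w2(1) w3(1) w4(1)) sat
  thus ?thesis using w1(1) w2(1) w3(1) w4(1) m by blast
qed

lemma par4: "even ((a::nat) + b + c + d) \<Longrightarrow> (odd a \<noteq> odd b) = (odd c \<noteq> odd d)"
  by auto

lemma four_elems:
  assumes "4 \<le> card S"
  shows "\<exists>a b c d. a \<in> S \<and> b \<in> S \<and> c \<in> S \<and> d \<in> S \<and> a \<noteq> b \<and> a \<noteq> c \<and> a \<noteq> d
           \<and> b \<noteq> c \<and> b \<noteq> d \<and> c \<noteq> d"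
proof -
  obtain a B where 1: "S = insert a B" "a \<notin> B" "3 \<le> card B" "finite B"
    using assms card_le_Suc_iff[of 3 S] by auto
  obtain b C where 2: "B = insert b C" "b \<notin> C" "2 \<le> card C" "finite C"
    using 1(3) card_le_Suc_iff[of 2 B] by auto
  obtain c D where 3: "C = insert c D" "c \<notin> D" "1 \<le> card D" "finite D"
    using 2(3) card_le_Suc_iff[of 1 C] by auto
  obtain d E where 4: "D = insert d E" "d \<notin> E"
    using 3(3) card_le_Suc_iff[of 0 D] by auto
  show ?thesis using 1 2 3 4 by blast
qed

theorem theorem4p3:
  fixes n :: nat and G :: "(nat \<times> bool \<Rightarrow> nat \<times> bool) set"
  assumes "is_subgroup G (WD n)"
    and "condH1 n G"
    and "minimal_cond n G"
  shows "card (orbits n G) \<le> 3"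
proof (rule ccontr)
  assume nc: "\<not> card (orbits n G) \<le> 3"
  have GW: "G \<subseteq> WD n" and idG: "id \<in> G" and compG: "\<forall>g\<in>G. \<forall>h\<in>G. g \<circ> h \<in> G"
    and invG: "\<forall>g\<in>G. inv g \<in> G" using assms(1) by (auto simp: is_subgroup_def)
  have minc: "\<forall>j\<in>{1..n}. \<exists>g\<in>G. g (j, True) = (j, False)" using assms(3) by (simp add: minimal_cond_def)
  have H1: "\<And>H. is_subgroup H G \<Longrightarrow> H1_vanishes n H" using assms(2) by (simp add: condH1_def)
  define Ix where "Ix j = (\<lambda>g. fst (g (j, True))) ` G" for j
  have Ix_sub: "Ix j \<subseteq> {1..n}" if "j \<in> {1..n}" for j
    using WD_fst_range GW that by (auto simp: Ix_def)
  have Ix_self: "j \<in> Ix j" for j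
    using idG unfolding Ix_def by (rule image_eqI[rotated]) simp
  have Ix_inv: "fst (h (u, True)) \<in> Ix j" if h: "h \<in> G" and u: "u \<in> Ix j" for h u j
  proof -
    obtain g where g: "g \<in> G" "u = fst (g (j, True))" using u by (auto simp: Ix_def)
    have gW: "g \<in> WD n" using g GW by auto
    obtain e where e: "g (j, e) = (u, True)" using WD_reach_True[OF gW, of j] g by auto
    have hg: "h \<circ> g \<in> G" "h \<circ> g \<in> WD n" using compG h g GW by auto
    have "fst (h (u, True)) = fst ((h \<circ> g) (j, e))" using e by simp
    also have "\<dots> = fst ((h \<circ> g) (j, True))" using WD_fst_any[OF hg(2)] by blast
    finally show ?thesis unfolding Ix_def by (rule image_eqI[OF _ hg(1)])
  qed
  have Ix_rev: "u \<in> Ix j" if h: "h \<in> G" and w: "fst (h (u, True)) \<in> Ix j" for h u j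
  proof -
    have hW: "h \<in> WD n" using h GW by auto
    obtain e where e: "h (u, e) = (fst (h (u, True)), True)" using WD_reach_True[OF hW] by blast
    have "inv h (fst (h (u, True)), True) = (u, e)" using e WD_inv1[OF hW] by metis
    moreover have "fst (inv h (fst (h (u, True)), True)) \<in> Ix j" using Ix_inv invG h w by blast
    ultimately show ?thesis by simp
  qed
  have Ix_eq: "Ix u = Ix j" if u: "u \<in> Ix j" for u j
  proof
    show "Ix u \<subseteq> Ix j"
    proof
      fix x assume "x \<in> Ix u"
      then obtain k where k: "k \<in> G" "x = fst (k (u, True))" by (auto simp: Ix_def)
      thus "x \<in> Ix j" using Ix_inv[OF k(1) u] by simp
    qed
  next
    obtain g where g: "g \<in> G" "u = fst (g (j, True))" using u by (auto simp: Ix_def)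
    have jIu: "j \<in> Ix u" using Ix_rev[OF g(1), of j u] g Ix_self by simp
    show "Ix j \<subseteq> Ix u"
    proof
      fix x assume "x \<in> Ix j"
      then obtain k where k: "k \<in> G" "x = fst (k (j, True))" by (auto simp: Ix_def)
      thus "x \<in> Ix u" using Ix_inv[OF k(1) jIu] by simp
    qed
  qed
  have Orb: "(\<lambda>g. g (j, b)) ` G = Ix j \<times> UNIV" if j: "j \<in> {1..n}" for j b
  proof
    show "(\<lambda>g. g (j, b)) ` G \<subseteq> Ix j \<times> (UNIV :: bool set)"
    proof
      fix y assume "y \<in> (\<lambda>g. g (j, b)) ` G"
      then obtain g where g: "g \<in> G" "y = g (j, b)" by auto
      have "fst y = fst (g (j, True))" using g WD_fst_any[of g n j b] GW by auto
      thus "y \<in> Ix j \<times> (UNIV :: bool set)" using g(1) by (auto simp: Ix_def mem_Times_iff)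
    qed
  next
    show "Ix j \<times> (UNIV :: bool set) \<subseteq> (\<lambda>g. g (j, b)) ` G"
    proof
      fix y assume "y \<in> Ix j \<times> (UNIV :: bool set)"
      then obtain g where g: "g \<in> G" "fst y = fst (g (j, True))" by (auto simp: Ix_def mem_Times_iff)
      have gW: "g \<in> WD n" using g GW by auto
      have fy: "fst y = fst (g (j, b))" using g WD_fst_any[OF gW] by metis
      show "y \<in> (\<lambda>g. g (j, b)) ` G"
      proof (cases "snd y = snd (g (j, b))")
        case True
        hence "y = g (j, b)" using fy by (simp add: prod_eq_iff)
        thus ?thesis using g(1) by blast
      next
        case False
        obtain g0 where g0: "g0 \<in> G" "g0 (j, True) = (j, False)" using minc j by blast
        have g0W: "g0 \<in> WD n" using g0 GW by auto
        have g0b: "g0 (j, b) = flip (j, b)"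
        proof (cases b)
          case True thus ?thesis using g0 by (simp add: flip_def)
        next
          case False thus ?thesis using g0 WD_False[OF g0W, of j] by (simp add: flip_def)
        qed
        have "(g \<circ> g0) (j, b) = flip (g (j, b))" using g0b WD_flip[OF gW] by simp
        hence "y = (g \<circ> g0) (j, b)" using fy False by (simp add: flip_def prod_eq_iff)
        moreover have "g \<circ> g0 \<in> G" using compG g g0 by auto
        ultimately show ?thesis by blast
      qed
    qed
  qed
  have Ix_disj: "Ix j \<inter> Ix j' = {}" if ne: "Ix j \<noteq> Ix j'" for j j'
  proof (rule ccontr)
    assume "Ix j \<inter> Ix j' \<noteq> {}"
    then obtain u where u1: "u \<in> Ix j" and u2: "u \<in> Ix j'" by blast
    have "Ix u = Ix j" "Ix u = Ix j'" by (rule Ix_eq[OF u1], rule Ix_eq[OF u2])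
    thus False using ne by simp
  qed
  have orbI: "\<exists>j\<in>{1..n}. Q = Ix j \<times> (UNIV :: bool set)" if Qo: "Q \<in> orbits n G" for Q
  proof -
    obtain x where x: "x \<in> symbols n" "Q = (\<lambda>g. g x) ` G" using Qo by (auto simp: orbits_def)
    obtain j b where jb: "x = (j, b)" by fastforce
    have j: "j \<in> {1..n}" using x jb by (auto simp: symbols_def)
    show ?thesis using Orb[OF j, of b] x jb j by auto
  qed
  have Ixinj: "Ix j \<noteq> Ix j'" if "Ix j \<times> (UNIV :: bool set) \<noteq> Ix j' \<times> UNIV" for j j'
    using that by auto
  obtain O1 O2 O3 O4 where O: "O1 \<in> orbits n G" "O2 \<in> orbits n G" "O3 \<in> orbits n G" "O4 \<in> orbits n G"
    "O1 \<noteq> O2" "O1 \<noteq> O3" "O1 \<noteq> O4" "O2 \<noteq> O3" "O2 \<noteq> O4" "O3 \<noteq> O4"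
    using four_elems[of "orbits n G"] nc by auto
  obtain j1 where js1: "j1 \<in> {1..n}" "O1 = Ix j1 \<times> (UNIV :: bool set)" using orbI[OF O(1)] by blast
  obtain j2 where js2: "j2 \<in> {1..n}" "O2 = Ix j2 \<times> (UNIV :: bool set)" using orbI[OF O(2)] by blast
  obtain j3 where js3: "j3 \<in> {1..n}" "O3 = Ix j3 \<times> (UNIV :: bool set)" using orbI[OF O(3)] by blast
  obtain j4 where js4: "j4 \<in> {1..n}" "O4 = Ix j4 \<times> (UNIV :: bool set)" using orbI[OF O(4)] by blast
  note js = js1(1) js2(1) js3(1) js4(1) js1(2) js2(2) js3(2) js4(2)
  have dif: "Ix j1 \<noteq> Ix j2" "Ix j1 \<noteq> Ix j3" "Ix j1 \<noteq> Ix j4" "Ix j2 \<noteq> Ix j3" "Ix j2 \<noteq> Ix j4" "Ix j3 \<noteq> Ix j4"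
    using O(5-10) js(5-8) Ixinj by metis+
  define A1 where "A1 = Ix j1"
  define A2 where "A2 = Ix j2"
  define A3 where "A3 = Ix j3"
  define A4 where "A4 = {1..n} - (A1 \<union> A2 \<union> A3)"
  have Asub: "A1 \<subseteq> {1..n}" "A2 \<subseteq> {1..n}" "A3 \<subseteq> {1..n}" "A4 \<subseteq> {1..n}"
    using Ix_sub js by (auto simp: A1_def A2_def A3_def A4_def)
  have disj: "A1 \<inter> A2 = {}" "A1 \<inter> A3 = {}" "A2 \<inter> A3 = {}"
    using Ix_disj dif by (auto simp: A1_def A2_def A3_def)
  have jA0: "j1 \<in> A1" "j2 \<in> A2" "j3 \<in> A3" using Ix_self by (auto simp: A1_def A2_def A3_def)
  have jA: "j1 \<in> A1" "j2 \<in> A2" "j3 \<in> A3" "j1 \<notin> A2" "j2 \<notin> A1" "j1 \<notin> A3" "j1 \<notin> A4"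
    using jA0 disj by (auto simp: A4_def)
  have j4A: "j4 \<in> A4"
  proof -
    have "j4 \<notin> Ix j1" using Ix_self[of j4] Ix_disj[OF dif(3)] by blast
    moreover have "j4 \<notin> Ix j2" using Ix_self[of j4] Ix_disj[OF dif(5)] by blast
    moreover have "j4 \<notin> Ix j3" using Ix_self[of j4] Ix_disj[OF dif(6)] by blast
    ultimately show ?thesis using js(4) unfolding A1_def A2_def A3_def A4_def by blast
  qed
  have invA123: "\<forall>h\<in>G. \<forall>u\<in>Ix j. fst (h (u, True)) \<in> Ix j" for j
    using Ix_inv by blast
  have invA4: "\<forall>h\<in>G. \<forall>u\<in>A4. fst (h (u, True)) \<in> A4"
  proof (intro ballI)
    fix h u assume h: "h \<in> G" and u: "u \<in> A4"
    have "fst (h (u, True)) \<in> {1..n}" using WD_fst_range[of h n u True] h GW u by (auto simp: A4_def)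
    moreover have "fst (h (u, True)) \<notin> A1 \<union> A2 \<union> A3"
    proof
      assume "fst (h (u, True)) \<in> A1 \<union> A2 \<union> A3"
      hence "u \<in> A1 \<union> A2 \<union> A3" unfolding A1_def A2_def A3_def using Ix_rev[OF h, of u] by blast
      thus False using u by (simp add: A4_def)
    qed
    ultimately show "fst (h (u, True)) \<in> A4" by (simp add: A4_def)
  qed
  have invA: "\<forall>h\<in>G. \<forall>u\<in>A1. fst (h (u, True)) \<in> A1" "\<forall>h\<in>G. \<forall>u\<in>A2. fst (h (u, True)) \<in> A2"
    "\<forall>h\<in>G. \<forall>u\<in>A3. fst (h (u, True)) \<in> A3" "\<forall>h\<in>G. \<forall>u\<in>A4. fst (h (u, True)) \<in> A4"
    using invA123 invA4 by (auto simp: A1_def A2_def A3_def)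
  have hom: "chi A (g \<circ> h) = (chi A g \<noteq> chi A h)"
    if "g \<in> G" "h \<in> G" "A \<subseteq> {1..n}" "\<forall>h\<in>G. \<forall>u\<in>A. fst (h (u, True)) \<in> A" for g h A
    using chi_comp[of g n h A] that GW by auto
  have chi_inv: "chi A (inv h) = chi A h"
    if "h \<in> G" "A \<subseteq> {1..n}" "\<forall>h\<in>G. \<forall>u\<in>A. fst (h (u, True)) \<in> A" for h A
  proof -
    have "chi A (h \<circ> inv h) = (chi A h \<noteq> chi A (inv h))" using hom[of h "inv h" A] that invG by auto
    moreover have "h \<circ> inv h = id" using WD_comp_inv that GW by auto
    ultimately show ?thesis using chi_id by metis
  qed
  have Psplit: "card {u\<in>X \<union> Y. P u} = card {u\<in>X. P u} + card {u\<in>Y. P u}"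
    if "X \<subseteq> {1..n}" "Y \<subseteq> {1..n}" "X \<inter> Y = {}" for X Y P
  proof -
    have "{u\<in>X \<union> Y. P u} = {u\<in>X. P u} \<union> {u\<in>Y. P u}" by auto
    moreover have "finite {u\<in>X. P u}" "finite {u\<in>Y. P u}"
      using that finite_subset[of _ "{1..n}"] by auto
    ultimately show ?thesis using card_Un_disjoint that(3) by fastforce
  qed
  have s0: "(chi A1 g \<noteq> chi A2 g) = (chi A3 g \<noteq> chi A4 g)" if g: "g \<in> G" for g
  proof -
    let ?P = "\<lambda>u. \<not> snd (g (u, True))"
    have ev: "even (card {u\<in>{1..n}. ?P u})" using g GW by (auto simp: WD_def)
    have un: "{1..n} = ((A1 \<union> A2) \<union> A3) \<union> A4" using Asub by (auto simp: A4_def)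
    have d1: "(A1 \<union> A2) \<inter> A3 = {}" using disj by auto
    have d2: "(A1 \<union> A2 \<union> A3) \<inter> A4 = {}" by (auto simp: A4_def)
    have s12: "A1 \<union> A2 \<subseteq> {1..n}" and s123: "A1 \<union> A2 \<union> A3 \<subseteq> {1..n}" using Asub by auto
    have "card {u\<in>{1..n}. ?P u} = card {u\<in>A1 \<union> A2 \<union> A3 \<union> A4. ?P u}"
      using un by simp
    also have "\<dots> = card {u\<in>A1 \<union> A2 \<union> A3. ?P u} + card {u\<in>A4. ?P u}"
      by (rule Psplit[OF s123 Asub(4) d2])
    also have "card {u\<in>A1 \<union> A2 \<union> A3. ?P u} = card {u\<in>A1 \<union> A2. ?P u} + card {u\<in>A3. ?P u}"
      by (rule Psplit[OF s12 Asub(3) d1])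
    also have "card {u\<in>A1 \<union> A2. ?P u} = card {u\<in>A1. ?P u} + card {u\<in>A2. ?P u}"
      by (rule Psplit[OF Asub(1) Asub(2) disj(1)])
    finally have "card {u\<in>{1..n}. ?P u} = card {u\<in>A1. ?P u} + card {u\<in>A2. ?P u} + card {u\<in>A3. ?P u} + card {u\<in>A4. ?P u}" .
    hence "even (card {u\<in>A1. ?P u} + card {u\<in>A2. ?P u} + card {u\<in>A3. ?P u} + card {u\<in>A4. ?P u})"
      using ev by simp
    thus ?thesis unfolding chi_def by (rule par4)
  qed
  have Gsub: "is_subgroup G G" using idG compG invG by (auto simp: is_subgroup_def)
  have blk: False
    if A: "A \<subseteq> {1..n}" "\<forall>h\<in>G. \<forall>u\<in>A. fst (h (u, True)) \<in> A" "\<forall>g\<in>G. \<not> chi A g"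
      and jk: "j \<in> A" "k \<in> {1..n}" "k \<notin> A" for A j k
  proof -
    obtain h1 where h1: "h1 \<in> G" "h1 (j, True) = (j, False)" using minc jk A(1) by blast
    obtain h2 where h2: "h2 \<in> G" "h2 (k, True) = (k, False)" using minc jk by blast
    have "\<not> H1_vanishes n G"
      by (rule not_H1[OF GW A(1) A(2) _ jk(1) h1 jk(2) jk(3) h2]) (use A(3) in \<open>simp add: chi_def\<close>)
    thus False using H1[OF Gsub] by simp
  qed
  consider (c1) "\<forall>g\<in>G. \<not> chi A1 g" | (c2) "\<forall>g\<in>G. \<not> chi A2 g" | (c3) "\<forall>g\<in>G. \<not> chi A3 g"
    | (c4) "\<forall>g\<in>G. \<not> chi A4 g"
    | (c5) a b d e where "a \<in> G" "chi A1 a" "b \<in> G" "chi A2 b" "d \<in> G" "chi A3 d" "e \<in> G" "chi A4 e"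
    by blast
  thus False
  proof cases
    case c1 show False by (rule blk[OF Asub(1) invA(1) c1 jA(1) js(2) jA(5)])
  next
    case c2 show False by (rule blk[OF Asub(2) invA(2) c2 jA(2) js(1) jA(4)])
  next
    case c3 show False by (rule blk[OF Asub(3) invA(3) c3 jA(3) js(1) jA(6)])
  next
    case c4 show False by (rule blk[OF Asub(4) invA(4) c4 j4A js(1) jA(7)])
  next
    case c5
    have "\<exists>g\<in>G. chi A1 g \<and> chi A2 g \<and> chi A3 g \<and> chi A4 g"
    proof (rule four_xor[where mul="(\<circ>)", OF _ _ _ _ _ s0 c5])
      show "\<And>x y. x \<in> G \<Longrightarrow> y \<in> G \<Longrightarrow> x \<circ> y \<in> G" using compG by blast
      show "\<And>x y. x \<in> G \<Longrightarrow> y \<in> G \<Longrightarrow> chi A1 (x \<circ> y) = (chi A1 x \<noteq> chi A1 y)"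
        by (rule hom[OF _ _ Asub(1) invA(1)])
      show "\<And>x y. x \<in> G \<Longrightarrow> y \<in> G \<Longrightarrow> chi A2 (x \<circ> y) = (chi A2 x \<noteq> chi A2 y)"
        by (rule hom[OF _ _ Asub(2) invA(2)])
      show "\<And>x y. x \<in> G \<Longrightarrow> y \<in> G \<Longrightarrow> chi A3 (x \<circ> y) = (chi A3 x \<noteq> chi A3 y)"
        by (rule hom[OF _ _ Asub(3) invA(3)])
      show "\<And>x y. x \<in> G \<Longrightarrow> y \<in> G \<Longrightarrow> chi A4 (x \<circ> y) = (chi A4 x \<noteq> chi A4 y)"
        by (rule hom[OF _ _ Asub(4) invA(4)])
    qed
    then obtain g where g: "g \<in> G" "chi A1 g" "chi A2 g" "chi A3 g" "chi A4 g" by blast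
    define H where "H = {h\<in>G. chi A1 h = chi A2 h}"
    have HG: "H \<subseteq> G" by (auto simp: H_def)
    have HW: "H \<subseteq> WD n" using HG GW by auto
    have compH: "\<forall>x\<in>H. \<forall>y\<in>H. x \<circ> y \<in> H"
    proof (intro ballI)
      fix x y assume x: "x \<in> H" and y: "y \<in> H"
      hence xy: "x \<in> G" "y \<in> G" "chi A1 x = chi A2 x" "chi A1 y = chi A2 y" by (auto simp: H_def)
      have "chi A1 (x \<circ> y) = chi A2 (x \<circ> y)"
        using hom[OF xy(1) xy(2) Asub(1) invA(1)] hom[OF xy(1) xy(2) Asub(2) invA(2)] xy(3,4) by simp
      thus "x \<circ> y \<in> H" using compG xy(1,2) by (simp add: H_def)
    qed
    have invH: "\<forall>x\<in>H. inv x \<in> H"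
    proof
      fix x assume x: "x \<in> H"
      hence xy: "x \<in> G" "chi A1 x = chi A2 x" by (auto simp: H_def)
      have "chi A1 (inv x) = chi A2 (inv x)"
        using chi_inv[OF xy(1) Asub(1) invA(1)] chi_inv[OF xy(1) Asub(2) invA(2)] xy(2) by simp
      thus "inv x \<in> H" using invG xy(1) by (simp add: H_def)
    qed
    have idH: "id \<in> H" using idG chi_id by (auto simp: H_def)
    have Hsub: "is_subgroup H G" using HG compH invH idH by (auto simp: is_subgroup_def)
    have gH: "g \<in> H" using g by (auto simp: H_def)
    have fl: "\<exists>h\<in>H. \<exists>u\<in>A. h (u, True) = (u, False)"
      if A: "A \<subseteq> {1..n}" "\<forall>h\<in>G. \<forall>u\<in>A. fst (h (u, True)) \<in> A" "chi A g" for A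
    proof (rule ccontr)
      assume "\<not> ?thesis"
      hence "even (card {u\<in>A. \<not> snd (g (u, True))})"
        using noflip_even[OF HW compH invH A(1) _ _ gH] A(2) HG by blast
      thus False using A(3) by (simp add: chi_def)
    qed
    obtain h1 j where h1: "h1 \<in> H" "j \<in> A1" "h1 (j, True) = (j, False)"
      using fl[OF Asub(1) invA(1) g(2)] by blast
    obtain h2 k where h2: "h2 \<in> H" "k \<in> A3" "h2 (k, True) = (k, False)"
      using fl[OF Asub(3) invA(3) g(4)] by blast
    have kn: "k \<in> {1..n}" "k \<notin> A1 \<union> A2" using h2(2) Asub disj by auto
    have sub12: "A1 \<union> A2 \<subseteq> {1..n}" using Asub by auto
    have inv12: "\<forall>h\<in>H. \<forall>u\<in>A1 \<union> A2. fst (h (u, True)) \<in> A1 \<union> A2" using invA HG by blast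
    have par12: "\<forall>h\<in>H. even (card {u\<in>A1 \<union> A2. \<not> snd (h (u, True))})"
    proof
      fix h assume "h \<in> H"
      hence "chi A1 h = chi A2 h" by (simp add: H_def)
      thus "even (card {u\<in>A1 \<union> A2. \<not> snd (h (u, True))})"
        using Psplit[OF Asub(1) Asub(2) disj(1)] by (simp add: chi_def)
    qed
    have "\<not> H1_vanishes n H"
      using not_H1[OF HW sub12 inv12 par12 _ h1(1) h1(3) kn(1) kn(2) h2(1) h2(3)] h1(2) by blast
    thus False using H1[OF Hsub] by simp
  qed
qed

end
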